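(* Let $(E,\pi,M)$ be a bundle with connection $\Delta^h$, let $\{u^I\}$ be bundle coordinates on an open set $W\subseteq E$, let $\{X_I\}$ be the frame adapted to $\{\partial/\partial u^I\}$ and $\Gamma_\mu^a$ the coefficients of $\Delta^h$ in it. Let $V\subseteq W$ be open and $U\subseteq V$, and suppose the normal coordinates equation $$\Big(\frac{\partial\tilde u^a}{\partial u^b}\Gamma_\mu^b+\frac{\partial\tilde u^a}{\partial u^\mu}\Big)\Big|_U=0$$ has solutions. Then all frames $\{\tilde X_I\}$ normal on $U$ and adapted to (the coordinate frames of) local bundle coordinates defined on $V$ are described by $$\tilde X_\mu|_U=(A_\mu^\nu X_\nu)|_U=\frac{\partial}{\partial\tilde u^\mu}\Big|_U,\qquad \tilde X_a|_U=(A_a^bX_b)|_U=\frac{\partial}{\partial\tilde u^a}\Big|_U,$$ where $\{\tilde u^I\}$ are bundle coordinates with domain $V$ whose fibre components $\tilde u^a$ are solutions of the normal coordinates equation above, $\{\tilde X_I\}$ is the frame adapted to $\{\partial/\partial\tilde u^I\}$, and $A_I^J=\partial u^J/\partial\tilde u^I$.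
   Context: $\dim M=n$, fibre dimension $r$; indices $\mu,\nu$ over $1,\dots,n$, $a,b$ over $n+1,\dots,n+r$, $I,J$ over $1,\dots,n+r$; summation convention. Bundle coordinates on open $U\subseteq E$: coordinates $\{u^I\}$ with $u^\mu=x^\mu\circ\pi$ for coordinates $\{x^\mu\}$ on $\pi(U)$; admissible changes have $\tilde u^\mu$ depending only on $u^1,\dots,u^n$. Vertical distribution $\Delta^v_p=T_p(\pi^{-1}(\pi(p)))$; a connection is an $n$-dimensional distribution $\Delta^h$ with $\Delta^v_p\oplus\Delta^h_p=T_p(E)$. The frame adapted to $\{e_I\}$ (with $\{e_a\}$ a basis of $\Delta^v$) is $X_\mu=(\pi_*|_{\Delta^h})^{-1}\pi_*(e_\mu)$, $X_a=e_a$; then $X_\mu=e_\mu+\Gamma_\mu^be_b$ defines the coefficients $\Gamma_\mu^a$. An adapted frame is normal on $U$ if its coefficients vanish on $U$. *)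

theory Defs
  imports "HOL-Analysis.Analysis"
begin

text \<open>The open set W of the bundle E carrying the bundle coordinates
  u = (u^mu, u^a) is identified, via u, with an open subset of
  real^'n \<times> real^'r (first component: base coordinates x^mu = u^mu, second
  component: fibre coordinates u^a). Tangent vectors at points of W are identified,
  via du, with their u-components in real^'n \<times> real^'r. The projection pi is
  fst, hence pi_* of a tangent vector is (in the base coordinates) its fst, and the
  vertical space is the set of vectors with fst = 0. Indices I range over
  'n + 'r: Inl mu is a base index, Inr a a fibre index.\<close>

type_synonym ('n, 'r) pt = "(real^'n) \<times> (real^'r)"

definition bvec :: "'n + 'r \<Rightarrow> ('n::finite, 'r::finite) pt" where
  "bvec I = (case I of Inl mu \<Rightarrow> (axis mu 1, 0) | Inr a \<Rightarrow> (0, axis a 1))"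

definition comp :: "('n::finite, 'r::finite) pt \<Rightarrow> 'n + 'r \<Rightarrow> real" where
  "comp v I = (case I of Inl mu \<Rightarrow> fst v $ mu | Inr a \<Rightarrow> snd v $ a)"

fun Ck_on :: "nat \<Rightarrow> ('a::real_normed_vector \<Rightarrow> 'b::real_normed_vector) \<Rightarrow> 'a set \<Rightarrow> bool" where
  "Ck_on 0 f S = continuous_on S f"
| "Ck_on (Suc k) f S =
     (f differentiable_on S \<and> (\<forall>v. Ck_on k (\<lambda>x. frechet_derivative f (at x) v) S))"

definition smooth_on :: "'a::real_normed_vector set \<Rightarrow> ('a \<Rightarrow> 'b::real_normed_vector) \<Rightarrow> bool" where
  "smooth_on S f \<longleftrightarrow> (\<forall>k. Ck_on k f S)"

text \<open>Vertical space (the same at every point in the u-model).\<close>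
definition vert :: "('n::finite, 'r::finite) pt set" where
  "vert = {v. fst v = 0}"

definition connection ::
  "('n::finite, 'r::finite) pt set \<Rightarrow> (('n, 'r) pt \<Rightarrow> ('n, 'r) pt set) \<Rightarrow> bool" where
  "connection W D \<longleftrightarrow>
     (\<forall>p\<in>W. subspace (D p) \<and> dim (D p) = CARD('n) \<and>
        D p \<inter> vert = {0} \<and> {h + w | h w. h \<in> D p \<and> w \<in> vert} = UNIV)"

text \<open>The frame adapted to a frame e (e I p is the I-th vector at p; e (Inr a) are
  vertical): X_mu = (pi_* restricted to D)^{-1} pi_*(e_mu), X_a = e_a.\<close>
definition adapted_frame ::
  "(('n::finite, 'r::finite) pt \<Rightarrow> ('n, 'r) pt set) \<Rightarrow> ('n + 'r \<Rightarrow> ('n, 'r) pt \<Rightarrow> ('n, 'r) pt)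
    \<Rightarrow> 'n + 'r \<Rightarrow> ('n, 'r) pt \<Rightarrow> ('n, 'r) pt" where
  "adapted_frame D e I p = (case I of
      Inl mu \<Rightarrow> (THE X. X \<in> D p \<and> fst X = fst (e (Inl mu) p))
    | Inr a \<Rightarrow> e (Inr a) p)"

definition frame_coeffs ::
  "(('n::finite, 'r::finite) pt \<Rightarrow> ('n, 'r) pt set) \<Rightarrow> ('n + 'r \<Rightarrow> ('n, 'r) pt \<Rightarrow> ('n, 'r) pt)
    \<Rightarrow> ('n, 'r) pt \<Rightarrow> 'n \<Rightarrow> 'r \<Rightarrow> real" where
  "frame_coeffs D e p mu a =
     (THE c. adapted_frame D e (Inl mu) p = e (Inl mu) p + (\<Sum>b\<in>UNIV. c b *\<^sub>R e (Inr b) p)) a"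

definition normal_on ::
  "(('n::finite, 'r::finite) pt \<Rightarrow> ('n, 'r) pt set) \<Rightarrow> ('n + 'r \<Rightarrow> ('n, 'r) pt \<Rightarrow> ('n, 'r) pt)
    \<Rightarrow> ('n, 'r) pt set \<Rightarrow> bool" where
  "normal_on D e U \<longleftrightarrow> (\<forall>p\<in>U. \<forall>mu a. frame_coeffs D e p mu a = 0)"

definition ucoord_frame :: "'n + 'r \<Rightarrow> ('n::finite, 'r::finite) pt \<Rightarrow> ('n, 'r) pt" where
  "ucoord_frame I p = bvec I"

text \<open>Bundle coordinates \<tilde>u = phi (expressed in terms of u) with domain V, and
  psi the inverse map (u in terms of \<tilde>u): a diffeomorphism of V onto an open set,
  with the base components \<tilde>u^mu depending only on u^1..u^n.\<close>
definition bundle_coords ::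
  "('n::finite, 'r::finite) pt set \<Rightarrow> (('n, 'r) pt \<Rightarrow> ('n, 'r) pt) \<Rightarrow> (('n, 'r) pt \<Rightarrow> ('n, 'r) pt) \<Rightarrow> bool" where
  "bundle_coords V phi psi \<longleftrightarrow>
     open (phi ` V) \<and> smooth_on V phi \<and> smooth_on (phi ` V) psi \<and>
     (\<forall>p\<in>V. psi (phi p) = p) \<and> (\<forall>q\<in>phi ` V. phi (psi q) = q) \<and>
     (\<forall>p\<in>V. \<forall>q\<in>V. fst p = fst q \<longrightarrow> fst (phi p) = fst (phi q))"

text \<open>Partial derivative d\<tilde>u^J / du^I at p.\<close>
definition pd :: "(('n::finite, 'r::finite) pt \<Rightarrow> ('n, 'r) pt) \<Rightarrow> ('n, 'r) pt \<Rightarrow> 'n + 'r \<Rightarrow> 'n + 'r \<Rightarrow> real" where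
  "pd phi p I J = comp (frechet_derivative phi (at p) (bvec I)) J"

text \<open>The coordinate frame d/d\<tilde>u^I (u-components): d/d\<tilde>u^I = A_I^J d/du^J with
  A_I^J = du^J/d\<tilde>u^I evaluated at \<tilde>u(p).\<close>
definition Amat :: "(('n::finite, 'r::finite) pt \<Rightarrow> ('n, 'r) pt) \<Rightarrow> (('n, 'r) pt \<Rightarrow> ('n, 'r) pt)
    \<Rightarrow> ('n, 'r) pt \<Rightarrow> 'n + 'r \<Rightarrow> 'n + 'r \<Rightarrow> real" where
  "Amat phi psi p I J = pd psi (phi p) I J"

definition coord_frame :: "(('n::finite, 'r::finite) pt \<Rightarrow> ('n, 'r) pt) \<Rightarrow> (('n, 'r) pt \<Rightarrow> ('n, 'r) pt)
    \<Rightarrow> 'n + 'r \<Rightarrow> ('n, 'r) pt \<Rightarrow> ('n, 'r) pt" where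
  "coord_frame phi psi I p = frechet_derivative psi (at (phi p)) (bvec I)"

definition normal_coords_eq ::
  "(('n::finite, 'r::finite) pt \<Rightarrow> ('n, 'r) pt set) \<Rightarrow> (('n, 'r) pt \<Rightarrow> ('n, 'r) pt) \<Rightarrow> ('n, 'r) pt set \<Rightarrow> bool" where
  "normal_coords_eq D phi U \<longleftrightarrow>
     (\<forall>p\<in>U. \<forall>mu a.
        (\<Sum>b\<in>UNIV. pd phi p (Inr b) (Inr a) * frame_coeffs D ucoord_frame p mu b)
        + pd phi p (Inl mu) (Inr a) = 0)"

end

theory Submission
  imports Defs
begin

lemma sumvec2: "(\<Sum>b\<in>UNIV. c b *\<^sub>R ((0::real^'n::finite), axis b 1 :: real^'r::finite)) = (0, \<chi> b. c b)"
  by (simp add: prod_eq_iff fst_sum snd_sum vec_eq_iff axis_def if_distrib sum.delta cong: if_cong)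

lemma sumvec2': "(\<Sum>b\<in>UNIV. ((0::real^'n::finite), c b *\<^sub>R axis b 1 :: real^'r::finite)) = (0, \<chi> b. c b)"
  using sumvec2[of c] by simp

lemma sumvec1: "(\<Sum>b\<in>UNIV. c b *\<^sub>R (axis b 1 :: real^'n::finite, (0::real^'r::finite))) = (\<chi> b. c b, 0)"
  by (simp add: prod_eq_iff fst_sum snd_sum vec_eq_iff axis_def if_distrib sum.delta cong: if_cong)

lemma basis_exp: "(\<Sum>i\<in>UNIV. (x$i) *\<^sub>R axis i 1) = (x::real^'n::finite)"
  using basis_expansion[of x] by (simp add: scalar_mult_eq_scaleR)

lemma surj_test: fixes g :: "real^'r::finite \<Rightarrow> real^'r" shows "linear g \<Longrightarrow> inj g \<Longrightarrow> surj g"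
  using linear_injective_imp_surjective by blast

lemma pointwise:
  fixes D :: "('n::finite, 'r::finite) pt \<Rightarrow> ('n, 'r) pt set"
    and phi psi :: "('n, 'r) pt \<Rightarrow> ('n, 'r) pt"
    and L M :: "('n, 'r) pt \<Rightarrow> ('n, 'r) pt"
  assumes hL: "frechet_derivative phi (at p) = L" and hM: "frechet_derivative psi (at (phi p)) = M"
    and lL: "linear L" and lM: "linear M" and hML: "\<And>v. M (L v) = v" and hLM: "\<And>v. L (M v) = v"
    and vL: "\<And>w. fst (L (0,w)) = 0"
    and sP: "subspace (D p)" and iP: "D p \<inter> vert = {0}"
    and cP: "{h + w | h w. h \<in> D p \<and> w \<in> vert} = UNIV"
  shows "(\<forall>mu a. frame_coeffs D (coord_frame phi psi) p mu a = 0) \<longleftrightarrow>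
          (\<forall>mu a. (\<Sum>b\<in>UNIV. pd phi p (Inr b) (Inr a) * frame_coeffs D ucoord_frame p mu b)
              + pd phi p (Inl mu) (Inr a) = 0)" (is "?N1 \<longleftrightarrow> ?N2")
    and "adapted_frame D (coord_frame phi psi) (Inl mu) p
           = (\<Sum>nu\<in>UNIV. Amat phi psi p (Inl mu) (Inl nu) *\<^sub>R adapted_frame D ucoord_frame (Inl nu) p)"
    and "(\<forall>mu a. frame_coeffs D (coord_frame phi psi) p mu a = 0) \<Longrightarrow>
          adapted_frame D (coord_frame phi psi) (Inl mu) p = coord_frame phi psi (Inl mu) p"
    and "adapted_frame D (coord_frame phi psi) (Inr a) p
           = (\<Sum>b\<in>UNIV. Amat phi psi p (Inr a) (Inr b) *\<^sub>R adapted_frame D ucoord_frame (Inr b) p)"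
    and "adapted_frame D (coord_frame phi psi) (Inr a) p = coord_frame phi psi (Inr a) p"
proof -
  define P where "P = D p"
  define H where "H x = (THE X. X \<in> P \<and> fst X = x)" for x
  have vert_iff: "v \<in> vert \<longleftrightarrow> fst v = 0" for v :: "('n,'r) pt" by (simp add: vert_def)
  have ex1: "\<exists>!X. X \<in> P \<and> fst X = x" for x
  proof -
    have "(x, 0) \<in> {h + w | h w. h \<in> D p \<and> w \<in> vert}" using cP by simp
    then obtain h w where hw: "(x,0) = h + w" "h \<in> P" "fst w = 0" by (auto simp: P_def vert_iff)
    then have "h \<in> P \<and> fst h = x" by (metis fst_add fst_conv add.right_neutral)
    moreover have "X = Y" if "X \<in> P" "fst X = x" "Y \<in> P" "fst Y = x" for X Y
    proof -
      have "X - Y \<in> P" using sP that by (simp add: P_def subspace_diff)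
      moreover have "X - Y \<in> vert" using that by (simp add: vert_iff)
      ultimately have "X - Y \<in> D p \<inter> vert" by (simp add: P_def)
      then have "X - Y = 0" using iP by blast
      then show ?thesis by simp
    qed
    ultimately show ?thesis by blast
  qed
  have HP: "H x \<in> P" and Hfst: "fst (H x) = x" for x
    using theI'[OF ex1[of x]] by (auto simp: H_def)
  have Huniq: "X \<in> P \<Longrightarrow> H (fst X) = X" for X
    unfolding H_def by (rule the1_equality[OF ex1]) auto
  have Hadd: "H (x + y) = H x + H y" for x y
    using Huniq[of "H x + H y"] HP sP by (simp add: Hfst P_def subspace_add)
  have Hscale: "H (c *\<^sub>R x) = c *\<^sub>R H x" for c x
    using Huniq[of "c *\<^sub>R H x"] HP sP by (simp add: Hfst P_def subspace_scale)
  have lH: "linear H" by (rule linearI) (simp_all add: Hadd Hscale)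
  have Linj: "L x = 0 \<Longrightarrow> x = 0" for x using hML[of x] lM by (simp add: linear_0)
  have Lvert: "L (0, w) = (0, snd (L (0, w)))" for w using vL[of w] by (simp add: prod_eq_iff)
  define g where "g y = snd (L (0, y))" for y
  have lg: "linear g"
  proof (rule linearI)
    fix x y :: "real^'r" and c :: real
    show "g (x + y) = g x + g y" unfolding g_def using linear_add[OF lL, of "(0,x)" "(0,y)"] by simp
    show "g (c *\<^sub>R x) = c *\<^sub>R g x" unfolding g_def using linear_scale[OF lL, of c "(0,x)"] by simp
  qed
  have "inj g"
  proof (rule injI)
    fix x y assume "g x = g y"
    then have "L (0,x) = L (0,y)" using Lvert by (metis g_def)
    then have "M (L (0,x)) = M (L (0,y))" by simp
    then show "x = y" using hML by simp
  qed
  then have sg: "surj g" using lg linear_injective_imp_surjective by blast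
  have S2: "fst (M (0, w)) = 0" for w
  proof -
    obtain x y where m: "M (0, w) = (x, y)" by (cases "M (0,w)") auto
    have "(0, w) = L (x, y)" using hLM[of "(0,w)"] m by simp
    also have "L (x, y) = L (x, 0) + L (0, y)" using linear_add[OF lL, of "(x,0)" "(0,y)"] by simp
    finally have e: "L (x, 0) = (0, w - g y)" using Lvert[of y] by (simp add: g_def prod_eq_iff)
    obtain y2 where "g y2 = w - g y" using sg by (metis surjD)
    then have "L (0, y2) = L (x, 0)" using e Lvert[of y2] by (simp add: g_def)
    then have "(0, y2) = (x, (0::real^'r))" using hML by metis
    then show ?thesis using m by simp
  qed
  define A where "A mu = M (axis mu 1, 0)" for mu
  have cfl: "coord_frame phi psi (Inl mu) p = A mu" for mu
    by (simp add: coord_frame_def bvec_def hM A_def)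
  have cfr: "coord_frame phi psi (Inr b) p = M (0, axis b 1)" for b
    by (simp add: coord_frame_def bvec_def hM)
  have af_coord: "adapted_frame D (coord_frame phi psi) (Inl mu) p = H (fst (A mu))" for mu
    by (simp add: adapted_frame_def cfl H_def P_def)
  have af_u: "adapted_frame D ucoord_frame (Inl mu) p = H (axis mu 1)" for mu
    by (simp add: adapted_frame_def ucoord_frame_def bvec_def H_def P_def)
  have afr_coord: "adapted_frame D (coord_frame phi psi) (Inr a) p = M (0, axis a 1)" for a
    by (simp add: adapted_frame_def cfr)
  have afr_u: "adapted_frame D ucoord_frame (Inr a) p = (0, axis a 1)" for a
    by (simp add: adapted_frame_def ucoord_frame_def bvec_def)
  have Msum: "(\<Sum>b\<in>UNIV. c b *\<^sub>R M (0, axis b 1)) = M (0, \<chi> b. c b)" for c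
  proof -
    have "M (\<Sum>b\<in>UNIV. c b *\<^sub>R (0, axis b 1)) = (\<Sum>b\<in>UNIV. c b *\<^sub>R M (0, axis b 1))"
      by (simp only: linear_sum[OF lM] linear_scale[OF lM])
    then show ?thesis by (simp only: sumvec2)
  qed
  have fc_coord: "frame_coeffs D (coord_frame phi psi) p mu a = snd (L (H (fst (A mu)) - A mu)) $ a" for mu a
  proof -
    define d where "d = H (fst (A mu)) - A mu"
    have fd: "fst d = 0" by (simp add: Hfst d_def)
    have Ld: "L d = (0, snd (L d))" using Lvert[of "snd d"] fd by (metis prod.collapse)
    have eq: "H (fst (A mu)) = A mu + (\<Sum>b\<in>UNIV. c b *\<^sub>R M (0, axis b 1)) \<longleftrightarrow> c = (\<lambda>b. snd (L d) $ b)" for c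
    proof -
      have "H (fst (A mu)) = A mu + (\<Sum>b\<in>UNIV. c b *\<^sub>R M (0, axis b 1)) \<longleftrightarrow> d = M (0, \<chi> b. c b)"
        by (auto simp: Msum d_def algebra_simps)
      also have "\<dots> \<longleftrightarrow> L d = (0, \<chi> b. c b)" by (metis hML hLM)
      also have "\<dots> \<longleftrightarrow> c = (\<lambda>b. snd (L d) $ b)"
        by (subst Ld) (auto simp: vec_eq_iff fun_eq_iff)
      finally show ?thesis .
    qed
    have "(THE c. H (fst (A mu)) = A mu + (\<Sum>b\<in>UNIV. c b *\<^sub>R M (0, axis b 1))) = (\<lambda>b. snd (L d) $ b)"
      by (rule the_equality) (use eq in auto)
    then show ?thesis by (simp add: frame_coeffs_def af_coord cfl cfr d_def)
  qed
  have fc_u: "frame_coeffs D ucoord_frame p mu b = snd (H (axis mu 1)) $ b" for mu b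
  proof -
    have eq: "H (axis mu 1) = (axis mu 1, 0) + (\<Sum>b\<in>UNIV. c b *\<^sub>R (0, axis b 1)) \<longleftrightarrow> c = (\<lambda>b. snd (H (axis mu 1)) $ b)" for c
      by (simp only: sumvec2) (auto simp: prod_eq_iff vec_eq_iff fun_eq_iff Hfst)
    have "(THE c. H (axis mu 1) = (axis mu 1, 0) + (\<Sum>b\<in>UNIV. c b *\<^sub>R (0, axis b 1))) = (\<lambda>b. snd (H (axis mu 1)) $ b)"
      by (rule the_equality) (use eq in auto)
    then show ?thesis by (simp add: frame_coeffs_def af_u ucoord_frame_def bvec_def)
  qed
  have N1: "?N1 \<longleftrightarrow> (\<forall>mu. H (fst (A mu)) = A mu)"
  proof -
    have "(\<forall>a. frame_coeffs D (coord_frame phi psi) p mu a = 0) \<longleftrightarrow> H (fst (A mu)) = A mu" for mu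
    proof -
      define d where "d = H (fst (A mu)) - A mu"
      have fd: "fst d = 0" by (simp add: Hfst d_def)
      have Ld: "L d = (0, snd (L d))" using Lvert[of "snd d"] fd by (metis prod.collapse)
      have "(\<forall>a. frame_coeffs D (coord_frame phi psi) p mu a = 0) \<longleftrightarrow> snd (L d) = 0"
        by (simp add: fc_coord d_def vec_eq_iff)
      also have "\<dots> \<longleftrightarrow> L d = 0" using Ld by (metis prod.sel(2) snd_zero zero_prod_def)
      also have "\<dots> \<longleftrightarrow> d = 0" using Linj lL linear_0 by metis
      finally show ?thesis by (simp add: d_def)
    qed
    then show ?thesis by blast
  qed
  have key: "(\<Sum>b\<in>UNIV. pd phi p (Inr b) (Inr a) * frame_coeffs D ucoord_frame p mu b)
              + pd phi p (Inl mu) (Inr a) = snd (L (H (axis mu 1))) $ a" for mu a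
  proof -
    let ?e = "axis mu 1 :: real^'n"
    have he: "H ?e = (?e, 0) + (\<Sum>b\<in>UNIV. (snd (H ?e) $ b) *\<^sub>R (0, axis b 1))"
      by (simp only: sumvec2) (simp add: prod_eq_iff Hfst vec_lambda_eta)
    have "L (H ?e) = L (?e, 0) + L (\<Sum>b\<in>UNIV. (snd (H ?e) $ b) *\<^sub>R (0, axis b 1))"
      by (subst he) (simp only: linear_add[OF lL])
    also have "L (\<Sum>b\<in>UNIV. (snd (H ?e) $ b) *\<^sub>R (0, axis b 1)) = (\<Sum>b\<in>UNIV. (snd (H ?e) $ b) *\<^sub>R L (0, axis b 1))"
      by (simp only: linear_sum[OF lL] linear_scale[OF lL])
    finally have "L (H ?e) = L (?e, 0) + (\<Sum>b\<in>UNIV. (snd (H ?e) $ b) *\<^sub>R L (0, axis b 1))" .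
    then have "snd (L (H ?e)) $ a = snd (L (?e, 0)) $ a + (\<Sum>b\<in>UNIV. (snd (H ?e) $ b) * snd (L (0, axis b 1)) $ a)"
      by (simp add: snd_sum sum_component)
    then show ?thesis by (simp add: pd_def comp_def bvec_def hL fc_u mult.commute)
  qed
  have N2: "?N2 \<longleftrightarrow> (\<forall>mu. snd (L (H (axis mu 1))) = 0)"
    by (simp add: key vec_eq_iff)
  have AP: "A mu \<in> P \<Longrightarrow> H (fst (A mu)) = A mu" for mu using Huniq by blast
  have eqv: "(\<forall>mu. H (fst (A mu)) = A mu) \<longleftrightarrow> (\<forall>mu. snd (L (H (axis mu 1))) = 0)"
  proof
    assume N1': "\<forall>mu. H (fst (A mu)) = A mu"
    show "\<forall>mu. snd (L (H (axis mu 1))) = 0"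
    proof
      fix nu
      obtain u v where Luv: "L (H (axis nu 1)) = (u, v)" by (cases "L (H (axis nu 1))") auto
      have "M (u, 0) = M (\<Sum>m\<in>UNIV. (u $ m) *\<^sub>R (axis m 1, 0))" by (simp only: sumvec1 vec_lambda_eta)
      also have "\<dots> = (\<Sum>m\<in>UNIV. (u $ m) *\<^sub>R A m)" by (simp only: linear_sum[OF lM] linear_scale[OF lM] A_def)
      finally have Mu: "M (u, 0) = (\<Sum>m\<in>UNIV. (u $ m) *\<^sub>R A m)" .
      have "A m \<in> P" for m using HP[of "fst (A m)"] N1' by metis
      then have "M (u, 0) \<in> P" unfolding Mu using sP by (simp add: P_def subspace_sum subspace_scale)
      moreover have "H (axis nu 1) = M (u, 0) + M (0, v)"
        using hML[of "H (axis nu 1)"] Luv linear_add[OF lM, of "(u,0)" "(0,v)"] by simp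
      ultimately have "M (0, v) \<in> P" using HP[of "axis nu 1"] sP
        by (metis P_def add_diff_cancel_left' subspace_diff)
      moreover have "M (0, v) \<in> vert" using S2 by (simp add: vert_iff)
      ultimately have "M (0, v) = 0" using iP unfolding P_def by blast
      then have "(0, v) = (0::('n,'r) pt)" using hLM[of "(0,v)"] lL by (simp add: linear_0)
      then show "snd (L (H (axis nu 1))) = 0" using Luv by (simp add: zero_prod_def)
    qed
  next
    assume N2': "\<forall>mu. snd (L (H (axis mu 1))) = 0"
    have all: "snd (L (H x)) = 0" for x
    proof -
      have "L (H x) = (\<Sum>nu\<in>UNIV. (x $ nu) *\<^sub>R L (H (axis nu 1)))"
        by (subst basis_exp[of x, symmetric]) (simp only: linear_sum[OF lH] linear_scale[OF lH] linear_sum[OF lL] linear_scale[OF lL])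
      then show ?thesis using N2' by (simp add: snd_sum)
    qed
    show "\<forall>mu. H (fst (A mu)) = A mu"
    proof
      fix mu
      define d where "d = H (fst (A mu)) - A mu"
      have fd: "fst d = 0" by (simp add: Hfst d_def)
      have Ld: "L d = (0, snd (L d))" using Lvert[of "snd d"] fd by (metis prod.collapse)
      have "L d = L (H (fst (A mu))) - L (A mu)" by (simp add: d_def linear_diff[OF lL])
      also have "L (A mu) = (axis mu 1, 0)" by (simp add: A_def hLM)
      finally have "snd (L d) = 0" using all by simp
      then have "L d = 0" using Ld by (simp add: zero_prod_def)
      then have "d = 0" by (rule Linj)
      then show "H (fst (A mu)) = A mu" by (simp add: d_def)
    qed
  qed
  show "?N1 \<longleftrightarrow> ?N2" using N1 N2 eqv by blast
  have Asum: "adapted_frame D (coord_frame phi psi) (Inl mu) p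
           = (\<Sum>nu\<in>UNIV. Amat phi psi p (Inl mu) (Inl nu) *\<^sub>R adapted_frame D ucoord_frame (Inl nu) p)" for mu
  proof -
    have "(\<Sum>nu\<in>UNIV. fst (A mu) $ nu *\<^sub>R H (axis nu 1)) = H (fst (A mu))"
      by (subst (2) basis_exp[of "fst (A mu)", symmetric]) (simp only: linear_sum[OF lH] linear_scale[OF lH])
    then show ?thesis by (simp add: af_coord af_u Amat_def pd_def comp_def bvec_def hM A_def)
  qed
  show "adapted_frame D (coord_frame phi psi) (Inl mu) p
           = (\<Sum>nu\<in>UNIV. Amat phi psi p (Inl mu) (Inl nu) *\<^sub>R adapted_frame D ucoord_frame (Inl nu) p)"
    by (rule Asum)
  show "?N1 \<Longrightarrow> adapted_frame D (coord_frame phi psi) (Inl mu) p = coord_frame phi psi (Inl mu) p"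
    using N1 by (simp add: af_coord cfl)
  show "adapted_frame D (coord_frame phi psi) (Inr a) p
           = (\<Sum>b\<in>UNIV. Amat phi psi p (Inr a) (Inr b) *\<^sub>R adapted_frame D ucoord_frame (Inr b) p)"
  proof -
    let ?B = "M (0, axis a 1)"
    have "(\<Sum>b\<in>UNIV. snd ?B $ b *\<^sub>R (0::real^'n, axis b 1)) = ?B"
      using S2[of "axis a 1"] by (simp add: sumvec2 sumvec2' vec_lambda_eta prod_eq_iff)
    then show ?thesis by (simp add: afr_coord afr_u Amat_def pd_def comp_def bvec_def hM)
  qed
  show "adapted_frame D (coord_frame phi psi) (Inr a) p = coord_frame phi psi (Inr a) p"
    by (simp add: afr_coord cfr)
qed

lemma coords_facts:
  fixes phi psi :: "('n::finite, 'r::finite) pt \<Rightarrow> ('n, 'r) pt"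
  assumes bc: "bundle_coords V phi psi" and oV: "open V" and pV: "p \<in> V"
    and hL: "L = frechet_derivative phi (at p)" and hM: "M = frechet_derivative psi (at (phi p))"
  shows "linear L" "linear M" "\<And>v. M (L v) = v" "\<And>v. L (M v) = v" "\<And>w. fst (L (0, w)) = 0"
proof -
  have oI: "open (phi ` V)" and s1: "smooth_on V phi" and s2: "smooth_on (phi ` V) psi"
    and inv1: "\<And>p. p \<in> V \<Longrightarrow> psi (phi p) = p" and inv2: "\<And>q. q \<in> phi ` V \<Longrightarrow> phi (psi q) = q"
    and fib: "\<And>p q. p \<in> V \<Longrightarrow> q \<in> V \<Longrightarrow> fst p = fst q \<Longrightarrow> fst (phi p) = fst (phi q)"
    using bc unfolding bundle_coords_def by blast+
  have "Ck_on (Suc 0) phi V" using s1 unfolding smooth_on_def by blast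
  then have "phi differentiable_on V" by simp
  then have d1: "phi differentiable (at p)" using oV pV differentiable_on_eq_differentiable_at by blast
  have "Ck_on (Suc 0) psi (phi ` V)" using s2 unfolding smooth_on_def by blast
  then have "psi differentiable_on (phi ` V)" by simp
  then have d2: "psi differentiable (at (phi p))" using oI pV differentiable_on_eq_differentiable_at by blast
  show lL: "linear L" using d1 hL linear_frechet_derivative by blast
  show lM: "linear M" using d2 hM linear_frechet_derivative by blast
  have h1: "(phi has_derivative L) (at p)" using d1 hL frechet_derivative_works by blast
  have h2: "(psi has_derivative M) (at (phi p))" using d2 hM frechet_derivative_works by blast
  have c1: "((psi \<circ> phi) has_derivative (M \<circ> L)) (at p)" by (rule diff_chain_at[OF h1 h2])
  have c1': "((psi \<circ> phi) has_derivative id) (at p)"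
    by (rule has_derivative_transform_within_open[OF has_derivative_id oV pV]) (simp add: inv1)
  have "M \<circ> L = id" using has_derivative_unique[OF c1 c1'] .
  then show "\<And>v. M (L v) = v" by (metis comp_apply id_apply)
  have h1': "(phi has_derivative L) (at (psi (phi p)))" using h1 inv1[OF pV] by simp
  have c2: "((phi \<circ> psi) has_derivative (L \<circ> M)) (at (phi p))" by (rule diff_chain_at[OF h2 h1'])
  have c2': "((phi \<circ> psi) has_derivative id) (at (phi p))"
    by (rule has_derivative_transform_within_open[OF has_derivative_id oI]) (use pV inv2 in auto)
  have "L \<circ> M = id" using has_derivative_unique[OF c2 c2'] .
  then show "\<And>v. L (M v) = v" by (metis comp_apply id_apply)
  fix w :: "real^'r"
  define \<gamma> where "\<gamma> t = p + t *\<^sub>R ((0::real^'n), w)" for t :: real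
  define S where "S = \<gamma> -` V"
  have oS: "open S" unfolding S_def \<gamma>_def
    by (rule continuous_open_vimage[OF oV]) (intro continuous_intros)
  have z: "((0::real^'n), (0::real^'r)) = 0" by (simp add: prod_eq_iff)
  have S0: "0 \<in> S" using pV by (simp add: S_def \<gamma>_def z)
  have g0: "\<gamma> 0 = p" by (simp add: \<gamma>_def z)
  have hg: "(\<gamma> has_derivative (\<lambda>t. t *\<^sub>R ((0::real^'n), w))) (at 0)"
    unfolding \<gamma>_def by (auto intro!: derivative_eq_intros)
  have h1'': "(phi has_derivative L) (at (\<gamma> 0))" using h1 g0 by simp
  have "((phi \<circ> \<gamma>) has_derivative (L \<circ> (\<lambda>t. t *\<^sub>R ((0::real^'n), w)))) (at 0)"
    by (rule diff_chain_at[OF hg h1''])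
  then have a: "((\<lambda>t. fst ((phi \<circ> \<gamma>) t)) has_derivative (\<lambda>t. fst ((L \<circ> (\<lambda>t. t *\<^sub>R ((0::real^'n), w))) t))) (at 0)"
    by (rule has_derivative_fst)
  have b: "((\<lambda>t. fst ((phi \<circ> \<gamma>) t)) has_derivative (\<lambda>t. 0)) (at 0)"
  proof (rule has_derivative_transform_within_open[OF has_derivative_const oS S0])
    fix t assume "t \<in> S"
    then have "\<gamma> t \<in> V" by (simp add: S_def)
    moreover have "fst (\<gamma> t) = fst p" by (simp add: \<gamma>_def)
    ultimately show "fst (phi p) = fst ((phi \<circ> \<gamma>) t)" using fib pV by (metis comp_apply)
  qed
  have "(\<lambda>t. fst ((L \<circ> (\<lambda>t. t *\<^sub>R ((0::real^'n), w))) t)) = (\<lambda>t. 0)"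
    by (rule has_derivative_unique[OF a b])
  then have "fst (L (1 *\<^sub>R ((0::real^'n), w))) = 0" by (metis comp_apply)
  then show "fst (L (0, w)) = 0" by simp
qed

lemma pointwise2:
  fixes D :: "('n::finite, 'r::finite) pt \<Rightarrow> ('n, 'r) pt set"
    and phi psi :: "('n, 'r) pt \<Rightarrow> ('n, 'r) pt"
  assumes bc: "bundle_coords V phi psi" and oV: "open V" and pV: "p \<in> V"
    and sP: "subspace (D p)" and iP: "D p \<inter> vert = {0}"
    and cP: "{h + w | h w. h \<in> D p \<and> w \<in> vert} = UNIV"
  shows "(\<forall>mu a. frame_coeffs D (coord_frame phi psi) p mu a = 0) \<longleftrightarrow>
          (\<forall>mu a. (\<Sum>b\<in>UNIV. pd phi p (Inr b) (Inr a) * frame_coeffs D ucoord_frame p mu b)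
              + pd phi p (Inl mu) (Inr a) = 0)"
    and "adapted_frame D (coord_frame phi psi) (Inl mu) p
           = (\<Sum>nu\<in>UNIV. Amat phi psi p (Inl mu) (Inl nu) *\<^sub>R adapted_frame D ucoord_frame (Inl nu) p)"
    and "(\<forall>mu a. frame_coeffs D (coord_frame phi psi) p mu a = 0) \<Longrightarrow>
          adapted_frame D (coord_frame phi psi) (Inl mu) p = coord_frame phi psi (Inl mu) p"
    and "adapted_frame D (coord_frame phi psi) (Inr a) p
           = (\<Sum>b\<in>UNIV. Amat phi psi p (Inr a) (Inr b) *\<^sub>R adapted_frame D ucoord_frame (Inr b) p)"
    and "adapted_frame D (coord_frame phi psi) (Inr a) p = coord_frame phi psi (Inr a) p"
  using pointwise[where D=D and phi=phi and psi=psi and p=p and L="frechet_derivative phi (at p)"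
      and M="frechet_derivative psi (at (phi p))", OF refl refl coords_facts[OF bc oV pV refl refl] sP iP cP]
  by blast+

theorem proposition5p1:
  fixes D :: "('n::finite, 'r::finite) pt \<Rightarrow> ('n, 'r) pt set"
    and W V U :: "('n, 'r) pt set"
  assumes "open W" and "connection W D"
    and "open V" and "V \<subseteq> W" and "U \<subseteq> V"
    and "\<exists>phi psi. bundle_coords V phi psi \<and> normal_coords_eq D phi U"
  shows "\<forall>phi psi. bundle_coords V phi psi \<longrightarrow>
    ((normal_on D (coord_frame phi psi) U \<longleftrightarrow> normal_coords_eq D phi U) \<and>
     (normal_on D (coord_frame phi psi) U \<longrightarrow>
        (\<forall>p\<in>U.
          (\<forall>mu. adapted_frame D (coord_frame phi psi) (Inl mu) p
                  = (\<Sum>nu\<in>UNIV. Amat phi psi p (Inl mu) (Inl nu) *\<^sub>R adapted_frame D ucoord_frame (Inl nu) p) \<and>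
                adapted_frame D (coord_frame phi psi) (Inl mu) p = coord_frame phi psi (Inl mu) p) \<and>
          (\<forall>a. adapted_frame D (coord_frame phi psi) (Inr a) p
                  = (\<Sum>b\<in>UNIV. Amat phi psi p (Inr a) (Inr b) *\<^sub>R adapted_frame D ucoord_frame (Inr b) p) \<and>
                adapted_frame D (coord_frame phi psi) (Inr a) p = coord_frame phi psi (Inr a) p))))"
proof (intro allI impI)
  fix phi psi :: "('n, 'r) pt \<Rightarrow> ('n, 'r) pt"
  assume bc: "bundle_coords V phi psi"
  have pV: "p \<in> V" if "p \<in> U" for p using that assms(5) by blast
  have cn: "subspace (D p) \<and> D p \<inter> vert = {0} \<and> {h + w | h w. h \<in> D p \<and> w \<in> vert} = UNIV"
    if "p \<in> U" for p
    using assms(2) pV[OF that] assms(4) unfolding connection_def by blast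
  have PW1: "(\<forall>mu a. frame_coeffs D (coord_frame phi psi) p mu a = 0) \<longleftrightarrow>
          (\<forall>mu a. (\<Sum>b\<in>UNIV. pd phi p (Inr b) (Inr a) * frame_coeffs D ucoord_frame p mu b)
              + pd phi p (Inl mu) (Inr a) = 0)" if "p \<in> U" for p
    using cn[OF that] pointwise2(1)[OF bc assms(3) pV[OF that], of D] by blast
  have PW2: "adapted_frame D (coord_frame phi psi) (Inl mu) p
           = (\<Sum>nu\<in>UNIV. Amat phi psi p (Inl mu) (Inl nu) *\<^sub>R adapted_frame D ucoord_frame (Inl nu) p)"
    if "p \<in> U" for p mu
    using cn[OF that] pointwise2(2)[OF bc assms(3) pV[OF that], of D] by blast
  have PW3: "(\<forall>mu a. frame_coeffs D (coord_frame phi psi) p mu a = 0) \<Longrightarrow>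
          adapted_frame D (coord_frame phi psi) (Inl mu) p = coord_frame phi psi (Inl mu) p"
    if "p \<in> U" for p mu
    using cn[OF that] pointwise2(3)[OF bc assms(3) pV[OF that], of D] by blast
  have PW4: "adapted_frame D (coord_frame phi psi) (Inr a) p
           = (\<Sum>b\<in>UNIV. Amat phi psi p (Inr a) (Inr b) *\<^sub>R adapted_frame D ucoord_frame (Inr b) p)"
    if "p \<in> U" for p a
    using cn[OF that] pointwise2(4)[OF bc assms(3) pV[OF that], of D] by blast
  have PW5: "adapted_frame D (coord_frame phi psi) (Inr a) p = coord_frame phi psi (Inr a) p"
    if "p \<in> U" for p a
    using cn[OF that] pointwise2(5)[OF bc assms(3) pV[OF that], of D] by blast
  have E: "normal_on D (coord_frame phi psi) U \<longleftrightarrow> normal_coords_eq D phi U"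
    unfolding normal_on_def normal_coords_eq_def using PW1 by blast
  show "(normal_on D (coord_frame phi psi) U \<longleftrightarrow> normal_coords_eq D phi U) \<and>
     (normal_on D (coord_frame phi psi) U \<longrightarrow>
        (\<forall>p\<in>U.
          (\<forall>mu. adapted_frame D (coord_frame phi psi) (Inl mu) p
                  = (\<Sum>nu\<in>UNIV. Amat phi psi p (Inl mu) (Inl nu) *\<^sub>R adapted_frame D ucoord_frame (Inl nu) p) \<and>
                adapted_frame D (coord_frame phi psi) (Inl mu) p = coord_frame phi psi (Inl mu) p) \<and>
          (\<forall>a. adapted_frame D (coord_frame phi psi) (Inr a) p
                  = (\<Sum>b\<in>UNIV. Amat phi psi p (Inr a) (Inr b) *\<^sub>R adapted_frame D ucoord_frame (Inr b) p) \<and>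
                adapted_frame D (coord_frame phi psi) (Inr a) p = coord_frame phi psi (Inr a) p)))"
  proof (intro conjI impI ballI allI)
    show "normal_on D (coord_frame phi psi) U \<longleftrightarrow> normal_coords_eq D phi U" by (rule E)
  next
    fix p mu assume "normal_on D (coord_frame phi psi) U" "p \<in> U"
    then have N: "\<forall>mu a. frame_coeffs D (coord_frame phi psi) p mu a = 0" unfolding normal_on_def by blast
    show "adapted_frame D (coord_frame phi psi) (Inl mu) p
                  = (\<Sum>nu\<in>UNIV. Amat phi psi p (Inl mu) (Inl nu) *\<^sub>R adapted_frame D ucoord_frame (Inl nu) p)"
      using PW2 \<open>p \<in> U\<close> by blast
    show "adapted_frame D (coord_frame phi psi) (Inl mu) p = coord_frame phi psi (Inl mu) p"
      using PW3 \<open>p \<in> U\<close> N by blast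
  next
    fix p a assume "normal_on D (coord_frame phi psi) U" "p \<in> U"
    show "adapted_frame D (coord_frame phi psi) (Inr a) p
                  = (\<Sum>b\<in>UNIV. Amat phi psi p (Inr a) (Inr b) *\<^sub>R adapted_frame D ucoord_frame (Inr b) p)"
      using PW4 \<open>p \<in> U\<close> by blast
    show "adapted_frame D (coord_frame phi psi) (Inr a) p = coord_frame phi psi (Inr a) p"
      using PW5 \<open>p \<in> U\<close> by blast
  qed
qed

end
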